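(* Let $d\geq 2$ and let $\rho^s$ be a state on $H_d=\mathbb{C}^d$ of rank two whose diagonal (in the computational basis) is supported on two indices, i.e. there are $k\neq l$ with $\rho^s_{kk}>0$, $\rho^s_{ll}>0$ and $\rho^s_{kk}+\rho^s_{ll}=1$. Then there exists an incoherent operation $\Lambda$ on $H_d\otimes H_d$ such that $\Lambda(\rho^s\otimes|0\rangle\langle 0|)$ is Bell-nonlocal if and only if $\rho^s$ is coherent.
   Context: Coherence is taken with respect to the computational basis of $H_d$ and the product computational basis of $H_d\otimes H_d$. A state is incoherent if it is diagonal in this basis, and coherent otherwise. An incoherent operation is a completely positive trace-preserving map $\Lambda(\rho)=\sum_j K_j\rho K_j^\dagger$ with $K_j\mathcal{I}K_j^\dagger\subseteq\mathcal{I}$ for all $j$, where $\mathcal{I}$ is the set of incoherent states. A state is Bell-nonlocal if it violates some Bell inequality, i.e. it does not admit a local hidden variable model. *)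

theory Defs
  imports "Jordan_Normal_Form.DL_Rank" "Jordan_Normal_Form.Schur_Decomposition"
begin

text \<open>Basis index i of H_d is the computational basis vector; in H_dA (x) H_dB the
  product basis vector |i> (x) |j> has index i * dB + j.\<close>

definition mtrace :: "complex mat \<Rightarrow> complex" where
  "mtrace A = (\<Sum>i<dim_row A. A $$ (i,i))"

definition quad_form :: "nat \<Rightarrow> complex mat \<Rightarrow> complex vec \<Rightarrow> complex" where
  "quad_form n A v = (\<Sum>i<n. \<Sum>j<n. cnj (v $ i) * A $$ (i,j) * v $ j)"

definition psd :: "nat \<Rightarrow> complex mat \<Rightarrow> bool" where
  "psd n A \<longleftrightarrow> A \<in> carrier_mat n n \<and>
     (\<forall>v \<in> carrier_vec n. Im (quad_form n A v) = 0 \<and> Re (quad_form n A v) \<ge> 0)"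

definition density :: "nat \<Rightarrow> complex mat \<Rightarrow> bool" where
  "density n \<rho> \<longleftrightarrow> psd n \<rho> \<and> mtrace \<rho> = 1"

definition incoherent_state :: "nat \<Rightarrow> complex mat \<Rightarrow> bool" where
  "incoherent_state n \<rho> \<longleftrightarrow> density n \<rho> \<and> diagonal_mat \<rho>"

definition coherent_state :: "nat \<Rightarrow> complex mat \<Rightarrow> bool" where
  "coherent_state n \<rho> \<longleftrightarrow> density n \<rho> \<and> \<not> diagonal_mat \<rho>"

definition kron :: "complex mat \<Rightarrow> complex mat \<Rightarrow> complex mat" where
  "kron A B = mat (dim_row A * dim_row B) (dim_col A * dim_col B)
     (\<lambda>(i,j). A $$ (i div dim_row B, j div dim_col B) * B $$ (i mod dim_row B, j mod dim_col B))"

definition ket0_proj :: "nat \<Rightarrow> complex mat" where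
  "ket0_proj d = mat d d (\<lambda>(i,j). if i = 0 \<and> j = 0 then 1 else 0)"

definition apply_kraus :: "nat \<Rightarrow> complex mat list \<Rightarrow> complex mat \<Rightarrow> complex mat" where
  "apply_kraus n Ks \<rho> = foldr (\<lambda>K acc. K * \<rho> * mat_adjoint K + acc) Ks (0\<^sub>m n n)"

definition incoherent_operation :: "nat \<Rightarrow> complex mat list \<Rightarrow> bool" where
  "incoherent_operation n Ks \<longleftrightarrow>
     (\<forall>K \<in> set Ks. K \<in> carrier_mat n n) \<and>
     foldr (\<lambda>K acc. mat_adjoint K * K + acc) Ks (0\<^sub>m n n) = 1\<^sub>m n \<and>
     (\<forall>K \<in> set Ks. \<forall>\<sigma>. incoherent_state n \<sigma> \<longrightarrow> diagonal_mat (K * \<sigma> * mat_adjoint K))"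

definition povm_family :: "nat \<Rightarrow> nat \<Rightarrow> nat \<Rightarrow> (nat \<Rightarrow> nat \<Rightarrow> complex mat) \<Rightarrow> bool" where
  "povm_family n m r M \<longleftrightarrow>
     (\<forall>x<m. (\<forall>a<r. psd n (M x a)) \<and> foldr (\<lambda>a acc. M x a + acc) [0..<r] (0\<^sub>m n n) = 1\<^sub>m n)"

text \<open>Local hidden variable model for the correlations of a bipartite state on C^dA (x) C^dB:
  for every finite Bell scenario (finitely many settings and outcomes, arbitrary POVMs)
  the correlations p(a,b|x,y) = tr(rho (M_{a|x} (x) N_{b|y})) admit a local hidden variable
  decomposition (finitely many hidden variables suffice in a finite scenario).\<close>
definition bell_local :: "nat \<Rightarrow> nat \<Rightarrow> complex mat \<Rightarrow> bool" where
  "bell_local dA dB \<rho> \<longleftrightarrow>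
    (\<forall>mA mB oA oB M N.
       povm_family dA mA oA M \<and> povm_family dB mB oB N \<longrightarrow>
       (\<exists>nh (q :: nat \<Rightarrow> real) (PA :: nat \<Rightarrow> nat \<Rightarrow> nat \<Rightarrow> real) (PB :: nat \<Rightarrow> nat \<Rightarrow> nat \<Rightarrow> real).
          (\<forall>h<nh. q h \<ge> 0) \<and> (\<Sum>h<nh. q h) = 1 \<and>
          (\<forall>h<nh. \<forall>x<mA. (\<forall>a<oA. PA h x a \<ge> 0) \<and> (\<Sum>a<oA. PA h x a) = 1) \<and>
          (\<forall>h<nh. \<forall>y<mB. (\<forall>b<oB. PB h y b \<ge> 0) \<and> (\<Sum>b<oB. PB h y b) = 1) \<and>
          (\<forall>x<mA. \<forall>y<mB. \<forall>a<oA. \<forall>b<oB.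
             mtrace (\<rho> * kron (M x a) (N y b)) = complex_of_real (\<Sum>h<nh. q h * PA h x a * PB h y b))))"

definition bell_nonlocal :: "nat \<Rightarrow> nat \<Rightarrow> complex mat \<Rightarrow> bool" where
  "bell_nonlocal dA dB \<rho> \<longleftrightarrow> density (dA * dB) \<rho> \<and> \<not> bell_local dA dB \<rho>"

end

theory Submission
  imports Defs
begin



lemma adj_eq: "mat_adjoint A = mat (dim_col A) (dim_row A) (\<lambda>(i,j). cnj (A $$ (j,i)))"
  unfolding mat_adjoint_def
  by (rule eq_matI) (auto simp: mat_of_rows_index)

lemma mult_entry: "A \<in> carrier_mat n m \<Longrightarrow> B \<in> carrier_mat m p \<Longrightarrow> i < n \<Longrightarrow> j < p \<Longrightarrow>
  (A * B) $$ (i,j) = (\<Sum>t<m. A $$ (i,t) * B $$ (t,j))"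
  by (simp add: scalar_prod_def atLeast0LessThan)

lemma foldr_sum_entry:
  assumes "\<forall>a\<in>set xs. f a \<in> carrier_mat n n"
  shows "foldr (\<lambda>a acc. f a + acc) xs (0\<^sub>m n n) \<in> carrier_mat n n \<and>
    (\<forall>i<n. \<forall>j<n. foldr (\<lambda>a acc. f a + acc) xs (0\<^sub>m n n) $$ (i,j) = (\<Sum>a\<leftarrow>xs. f a $$ (i,j)))"
  using assms by (induction xs) auto

lemma sum2:
  assumes "i < (n::nat)" "j < n" "i \<noteq> j" "\<And>t. t < n \<Longrightarrow> t \<noteq> i \<Longrightarrow> t \<noteq> j \<Longrightarrow> f t = 0"
  shows "(\<Sum>t<n. f t) = f i + f j"
proof -
  have "(\<Sum>t<n. f t) = (\<Sum>t\<in>{i,j}. f t)"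
    apply (rule sum.mono_neutral_right) apply simp using assms by auto
  thus ?thesis using assms by simp
qed

lemma sum1:
  assumes "i < (n::nat)" "\<And>t. t < n \<Longrightarrow> t \<noteq> i \<Longrightarrow> f t = 0"
  shows "(\<Sum>t<n. f t) = f i"
proof -
  have "(\<Sum>t<n. f t) = (\<Sum>t\<in>{i}. f t)"
    apply (rule sum.mono_neutral_right) apply simp using assms by auto
  thus ?thesis using assms by simp
qed

definition vec2 :: "nat \<Rightarrow> nat \<Rightarrow> nat \<Rightarrow> complex \<Rightarrow> complex \<Rightarrow> complex vec" where
  "vec2 n i j x y = vec n (\<lambda>t. if t = i then x else if t = j then y else 0)"

lemma quad_vec2:
  assumes "i < n" "j < n" "i \<noteq> j"
  shows "quad_form n A (vec2 n i j x y) =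
     cnj x * A $$ (i,i) * x + cnj x * A $$ (i,j) * y + cnj y * A $$ (j,i) * x + cnj y * A $$ (j,j) * y"
proof -
  have "quad_form n A (vec2 n i j x y) = (\<Sum>a<n. cnj (vec2 n i j x y $ a) * A $$ (a,i) * x + cnj (vec2 n i j x y $ a) * A $$ (a,j) * y)"
    unfolding quad_form_def
    apply (rule sum.cong[OF refl])
    apply (subst sum2[of i n j])
    using assms by (auto simp: vec2_def)
  also have "\<dots> = cnj x * A $$ (i,i) * x + cnj x * A $$ (i,j) * y + (cnj y * A $$ (j,i) * x + cnj y * A $$ (j,j) * y)"
    apply (subst sum2[of i n j])
    using assms by (auto simp: vec2_def)
  finally show ?thesis by simp
qed

lemma psd_carrier: "psd n A \<Longrightarrow> A \<in> carrier_mat n n" by (simp add: psd_def)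

lemma psd_quad: "psd n A \<Longrightarrow> v \<in> carrier_vec n \<Longrightarrow> Im (quad_form n A v) = 0 \<and> Re (quad_form n A v) \<ge> 0"
  by (simp add: psd_def)

lemma vec2_carrier[simp]: "vec2 n i j x y \<in> carrier_vec n" by (simp add: vec2_def)

lemma psd_diag:
  assumes "psd n A" "i < n"
  shows "Im (A $$ (i,i)) = 0" "Re (A $$ (i,i)) \<ge> 0" "A $$ (i,i) = complex_of_real (Re (A $$ (i,i)))"
proof -
  let ?v = "vec n (\<lambda>t. if t = i then 1 else 0) :: complex vec"
  have "quad_form n A ?v = A $$ (i,i)" unfolding quad_form_def
    apply (subst sum1[of i n]) using assms apply simp_all
    apply (subst sum1[of i n]) by simp_all
  then show "Im (A $$ (i,i)) = 0" "Re (A $$ (i,i)) \<ge> 0" using psd_quad[OF assms(1), of ?v] by auto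
  then show "A $$ (i,i) = complex_of_real (Re (A $$ (i,i)))" by (simp add: complex_eq_iff)
qed

lemma psd_herm:
  assumes "psd n A" "i < n" "j < n"
  shows "A $$ (j,i) = cnj (A $$ (i,j))"
proof (cases "i = j")
  case True
  then show ?thesis using psd_diag[OF assms(1,2)] by (simp add: complex_eq_iff)
next
  case False
  have d: "Im (A $$ (i,i)) = 0" "Im (A $$ (j,j)) = 0" using psd_diag assms by auto
  have "Im (quad_form n A (vec2 n i j 1 1)) = 0" using psd_quad[OF assms(1) vec2_carrier] by auto
  hence 1: "Im (A $$ (i,j)) + Im (A $$ (j,i)) = 0" using quad_vec2[of i n j A 1 1] assms False d by simp
  have "Im (quad_form n A (vec2 n i j 1 \<i>)) = 0" using psd_quad[OF assms(1) vec2_carrier] by auto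
  hence 2: "Re (A $$ (i,j)) - Re (A $$ (j,i)) = 0" using quad_vec2[of i n j A 1 \<i>] assms False d by simp
  show ?thesis using 1 2 by (simp add: complex_eq_iff)
qed

lemma psd_zero:
  assumes "psd n A" "i < n" "j < n" "A $$ (i,i) = 0"
  shows "A $$ (i,j) = 0"
proof (rule ccontr)
  assume a: "A $$ (i,j) \<noteq> 0"
  hence ij: "i \<noteq> j" using assms by auto
  define a where "a = A $$ (i,j)"
  have h: "A $$ (j,i) = cnj a" using psd_herm[OF assms(1-3)] a_def by simp
  define t where "t = (Re (A $$ (j,j)) + 1) / (2 * (cmod a)^2)"
  have pos: "cmod a > 0" using a a_def by simp
  define x where "x = - complex_of_real t * a"
  have "Re (quad_form n A (vec2 n i j x 1)) \<ge> 0" using psd_quad[OF assms(1) vec2_carrier] by auto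
  moreover have "quad_form n A (vec2 n i j x 1) = cnj x * a + cnj a * x + A $$ (j,j)"
    using quad_vec2[of i n j A x 1] assms ij h a_def by simp
  moreover have "cnj x * a = - complex_of_real (t * (cmod a)^2)" 
    unfolding x_def using complex_norm_square[of a] by (simp add: mult.commute mult.left_commute)
  moreover have "cnj a * x = - complex_of_real (t * (cmod a)^2)" 
    unfolding x_def using complex_norm_square[of a] by (simp add: mult.commute mult.left_commute)
  moreover have "t * (cmod a)^2 = (Re (A $$ (j,j)) + 1) / 2" unfolding t_def using pos by simp
  ultimately show False by simp
qed




definition swp :: "nat \<Rightarrow> nat \<Rightarrow> nat \<Rightarrow> nat" where
  "swp a b t = (if t = a then b else if t = b then a else t)"

lemma swp_inv[simp]: "swp a b (swp a b t) = t" by (auto simp: swp_def)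

definition Kmat :: "nat \<Rightarrow> (nat \<Rightarrow> nat) \<Rightarrow> complex mat" where
  "Kmat n p = mat n n (\<lambda>(i,j). if j = p i then 1 else 0)"

lemma Kmat_carrier[simp]: "Kmat n p \<in> carrier_mat n n" by (simp add: Kmat_def)

locale invol = fixes n :: nat and p :: "nat \<Rightarrow> nat"
  assumes p_lt: "\<And>t. t < n \<Longrightarrow> p t < n" and p_p[simp]: "\<And>t. p (p t) = t"
begin

lemma adj_K: "mat_adjoint (Kmat n p) = Kmat n p"
  unfolding adj_eq by (rule eq_matI) (auto simp: Kmat_def)

lemma K_mult: assumes "A \<in> carrier_mat n m" "i < n" "j < m"
  shows "(Kmat n p * A) $$ (i,j) = A $$ (p i, j)"
  apply (subst mult_entry[OF Kmat_carrier assms])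
  apply (subst sum1[of "p i"]) using assms p_lt by (auto simp: Kmat_def)

lemma mult_K: assumes "A \<in> carrier_mat m n" "i < m" "j < n"
  shows "(A * Kmat n p) $$ (i,j) = A $$ (i, p j)"
  apply (subst mult_entry[OF assms(1) Kmat_carrier assms(2,3)])
  apply (subst sum1[of "p j"]) using assms p_lt by (auto simp: Kmat_def)

lemma KAK: assumes "A \<in> carrier_mat n n"
  shows "Kmat n p * A * Kmat n p = mat n n (\<lambda>(i,j). A $$ (p i, p j))"
proof (rule eq_matI)
  fix i j assume ij: "i < dim_row (mat n n (\<lambda>(i,j). A $$ (p i, p j)))" "j < dim_col (mat n n (\<lambda>(i,j). A $$ (p i, p j)))"
  have c: "Kmat n p * A \<in> carrier_mat n n" using assms by (metis Kmat_carrier mult_carrier_mat)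
  show "(Kmat n p * A * Kmat n p) $$ (i,j) = mat n n (\<lambda>(i,j). A $$ (p i, p j)) $$ (i,j)"
    using mult_K[OF c] K_mult[OF assms] ij p_lt by simp
qed (use assms in \<open>auto simp: Kmat_def\<close>)

lemma KK: "Kmat n p * Kmat n p = 1\<^sub>m n"
proof (rule eq_matI)
  fix i j assume ij: "i < dim_row (1\<^sub>m n)" "j < dim_col (1\<^sub>m n :: complex mat)"
  show "(Kmat n p * Kmat n p) $$ (i,j) = 1\<^sub>m n $$ (i,j)"
    using K_mult[OF Kmat_carrier] ij p_lt by (auto simp: Kmat_def)
qed (auto simp: Kmat_def)

end




lemma kron_carrier[simp]: "kron A B \<in> carrier_mat (dim_row A * dim_row B) (dim_col A * dim_col B)"
  by (simp add: kron_def)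

lemma kron_entry: "i < dim_row A * dim_row B \<Longrightarrow> j < dim_col A * dim_col B \<Longrightarrow>
  kron A B $$ (i,j) = A $$ (i div dim_row B, j div dim_col B) * B $$ (i mod dim_row B, j mod dim_col B)"
  by (simp add: kron_def)

lemma ket0_dims[simp]: "dim_row (ket0_proj d) = d" "dim_col (ket0_proj d) = d"
  by (auto simp: ket0_proj_def)

lemma ket0_entry: "i < d \<Longrightarrow> j < d \<Longrightarrow> ket0_proj d $$ (i,j) = (if i = 0 \<and> j = 0 then 1 else 0)"
  by (simp add: ket0_proj_def)

lemma lt_sq: assumes "l < (d::nat)" "d \<ge> 2" shows "l * d + 1 < d * d"
proof -
  have "l * d + d \<le> d * d" using assms(1) by (metis Suc_leI add.commute mult_Suc mult_le_mono1)
  thus ?thesis using assms by linarith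
qed

locale setting =
  fixes d k l :: nat and \<rho> :: "complex mat"
  assumes d2: "d \<ge> 2" and k: "k < d" and l: "l < d" and kl: "k \<noteq> l"
    and rc: "\<rho> \<in> carrier_mat d d"
    and supp: "\<And>i j. i < d \<Longrightarrow> j < d \<Longrightarrow> \<rho> $$ (i,j) \<noteq> 0 \<Longrightarrow> (i = k \<or> i = l) \<and> (j = k \<or> j = l)"
begin

abbreviation "n \<equiv> d * d"
abbreviation "pp \<equiv> swp (l*d) (Suc (l*d))"
abbreviation "a \<equiv> k * d"
abbreviation "b \<equiv> Suc (l * d)"
definition "sigin = kron \<rho> (ket0_proj d)"
definition "sigout = mat n n (\<lambda>(i,j). sigin $$ (pp i, pp j))"

lemma bl: "b < n" using lt_sq[OF l d2] by simp
lemma al: "a < n" using lt_sq[OF k d2] by linarith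
lemma ld_lt: "l * d < n" using bl by linarith
lemma ab: "a \<noteq> b"
proof
  assume "a = b" hence "(k*d) mod d = (l*d+1) mod d" by simp
  moreover have "(l*d+1) mod d = 1" using d2 by (simp add: mod_Suc)
  ultimately show False by simp
qed
lemma bmod: "b mod d = 1" using d2 by (simp add: mod_Suc)
lemma bdiv: "b div d = l"
proof -
  have "b = 1 + l * d" by simp
  hence "b div d = 1 div d + l" using d2 by (metis div_mult_self3 not_numeral_le_zero le_0_eq add.commute neq0_conv)
  thus ?thesis using d2 by simp
qed
lemma pa: "pp a = a" using ab kl d2 by (simp add: swp_def)
lemma pb: "pp b = l * d" by (simp add: swp_def)

lemma invol: "invol n pp" 
proof
  fix t assume "t < n" thus "pp t < n" unfolding swp_def using bl ld_lt by presburger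
qed simp

lemma sigin_carrier: "sigin \<in> carrier_mat n n" unfolding sigin_def using kron_carrier[of \<rho> "ket0_proj d"] rc by simp

lemma sigin_entry: "i < n \<Longrightarrow> j < n \<Longrightarrow> sigin $$ (i,j) =
   \<rho> $$ (i div d, j div d) * (if i mod d = 0 \<and> j mod d = 0 then 1 else 0)"
  unfolding sigin_def using rc d2 by (simp add: kron_entry ket0_entry)

lemma sigin_zero: assumes "i < n" "j < n" "sigin $$ (i,j) \<noteq> 0"
  shows "(i = a \<or> i = l * d) \<and> (j = a \<or> j = l * d)"
proof -
  have m: "i mod d = 0" "j mod d = 0" and r: "\<rho> $$ (i div d, j div d) \<noteq> 0"
    using assms sigin_entry by (auto split: if_splits)
  have "i div d < d" "j div d < d" using assms by (auto simp: less_mult_imp_div_less)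
  hence "(i div d = k \<or> i div d = l) \<and> (j div d = k \<or> j div d = l)" using supp r by blast
  moreover have "i = (i div d) * d" "j = (j div d) * d" using m by (metis add.right_neutral div_mult_mod_eq)+
  ultimately show ?thesis by metis
qed

lemma sigout_zero: assumes "i < n" "j < n" "sigout $$ (i,j) \<noteq> 0"
  shows "(i = a \<or> i = b) \<and> (j = a \<or> j = b)"
proof -
  have "pp i < n" "pp j < n" using assms invol invol.p_lt by blast+
  moreover have "sigin $$ (pp i, pp j) \<noteq> 0" using assms sigout_def by simp
  ultimately have "(pp i = a \<or> pp i = l * d) \<and> (pp j = a \<or> pp j = l * d)" using sigin_zero by blast
  thus ?thesis by (metis pa pb swp_inv)
qed

lemma sigout_e: "i < n \<Longrightarrow> j < n \<Longrightarrow> sigout $$ (i,j) = sigin $$ (pp i, pp j)"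
  by (simp add: sigout_def)

lemma sigout_vals: "sigout $$ (a,a) = \<rho> $$ (k,k)" "sigout $$ (a,b) = \<rho> $$ (k,l)"
   "sigout $$ (b,a) = \<rho> $$ (l,k)" "sigout $$ (b,b) = \<rho> $$ (l,l)"
proof -
  have d0: "0 < d" using d2 by simp
  have x: "a div d = k" "a mod d = 0" "(l*d) div d = l" "(l*d) mod d = 0" using d0 by simp_all
  show "sigout $$ (a,a) = \<rho> $$ (k,k)"
    unfolding sigout_e[OF al al] pa sigin_entry[OF al al] x by simp
  show "sigout $$ (a,b) = \<rho> $$ (k,l)"
    unfolding sigout_e[OF al bl] pa pb sigin_entry[OF al ld_lt] x by simp
  show "sigout $$ (b,a) = \<rho> $$ (l,k)"
    unfolding sigout_e[OF bl al] pa pb sigin_entry[OF ld_lt al] x by simp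
  show "sigout $$ (b,b) = \<rho> $$ (l,l)"
    unfolding sigout_e[OF bl bl] pa pb sigin_entry[OF ld_lt ld_lt] x by simp
qed

lemma SUPP: "(\<Sum>i<n. \<Sum>j<n. sigout $$ (i,j) * g i j) =
   \<rho> $$ (k,k) * g a a + \<rho> $$ (k,l) * g a b + \<rho> $$ (l,k) * g b a + \<rho> $$ (l,l) * g b b"
proof -
  have inner: "(\<Sum>j<n. sigout $$ (i,j) * g i j) = sigout $$ (i,a) * g i a + sigout $$ (i,b) * g i b" if "i < n" for i
  proof (rule sum2[OF al bl ab])
    fix j assume "j < n" "j \<noteq> a" "j \<noteq> b"
    thus "sigout $$ (i,j) * g i j = 0" using sigout_zero[of i j] that by auto
  qed
  have "(\<Sum>i<n. \<Sum>j<n. sigout $$ (i,j) * g i j) = (\<Sum>i<n. sigout $$ (i,a) * g i a + sigout $$ (i,b) * g i b)"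
    using inner by simp
  also have "\<dots> = (sigout $$ (a,a) * g a a + sigout $$ (a,b) * g a b) + (sigout $$ (b,a) * g b a + sigout $$ (b,b) * g b b)"
  proof (rule sum2[OF al bl ab])
    fix i assume "i < n" "i \<noteq> a" "i \<noteq> b"
    hence "sigout $$ (i,a) = 0" "sigout $$ (i,b) = 0" using sigout_zero[of i a] sigout_zero[of i b] al bl by blast+
    thus "sigout $$ (i,a) * g i a + sigout $$ (i,b) * g i b = 0" by simp
  qed
  finally show ?thesis unfolding sigout_vals by (simp add: add.assoc)
qed

end




context setting begin

lemma K_carrier: "Kmat n pp \<in> carrier_mat n n" by simp

lemma adjK: "mat_adjoint (Kmat n pp) = Kmat n pp" using invol invol.adj_K by blast

lemma apply_out: "apply_kraus n [Kmat n pp] sigin = sigout"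
proof -
  have "Kmat n pp * sigin * Kmat n pp = sigout"
    unfolding sigout_def using invol.KAK[OF invol sigin_carrier] .
  moreover have "Kmat n pp * sigin * Kmat n pp \<in> carrier_mat n n" using sigin_carrier
    by (metis Kmat_carrier mult_carrier_mat)
  ultimately show ?thesis unfolding apply_kraus_def by (simp add: adjK)
qed

lemma incoh_op: "incoherent_operation n [Kmat n pp]"
  unfolding incoherent_operation_def
proof (intro conjI ballI allI impI)
  show "foldr (\<lambda>K acc. mat_adjoint K * K + acc) [Kmat n pp] (0\<^sub>m n n) = 1\<^sub>m n"
    using invol.KK[OF invol] by (simp add: adjK)
next
  fix K \<sigma> assume K: "K \<in> set [Kmat n pp]" and s: "incoherent_state n \<sigma>"
  hence sc: "\<sigma> \<in> carrier_mat n n" and sd: "diagonal_mat \<sigma>"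
    by (auto simp: incoherent_state_def density_def psd_def)
  have "K * \<sigma> * mat_adjoint K = mat n n (\<lambda>(i,j). \<sigma> $$ (pp i, pp j))"
    using K invol.KAK[OF invol sc] by (simp add: adjK)
  moreover have "diagonal_mat (mat n n (\<lambda>(i,j). \<sigma> $$ (pp i, pp j)))"
    unfolding diagonal_mat_def
  proof (intro allI impI)
    fix i j assume "i < dim_row (mat n n (\<lambda>(i,j). \<sigma> $$ (pp i, pp j)))" "j < dim_col (mat n n (\<lambda>(i,j). \<sigma> $$ (pp i, pp j)))" "i \<noteq> j"
    moreover hence "pp i \<noteq> pp j" "pp i < n" "pp j < n" using invol invol.p_lt swp_inv by (auto, metis swp_inv)
    ultimately show "mat n n (\<lambda>(i,j). \<sigma> $$ (pp i, pp j)) $$ (i,j) = 0"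
      using sd sc unfolding diagonal_mat_def by auto
  qed
  ultimately show "diagonal_mat (K * \<sigma> * mat_adjoint K)" by simp
qed (auto)

lemma sigout_carrier: "sigout \<in> carrier_mat n n" by (simp add: sigout_def)

lemma mtrace_sigout: "mtrace sigout = \<rho> $$ (k,k) + \<rho> $$ (l,l)"
proof -
  have "mtrace sigout = (\<Sum>i<n. \<Sum>j<n. sigout $$ (i,j) * (if i = j then 1 else 0))"
    unfolding mtrace_def using sigout_carrier by (simp add: if_distrib cong: if_cong)
  also have "\<dots> = \<rho> $$ (k,k) + \<rho> $$ (l,l)" by (subst SUPP) (use ab in simp)
  finally show ?thesis .
qed

lemma quad_sigout: "quad_form n sigout v = quad_form d \<rho> (vec2 d k l (v $ a) (v $ b))"
proof -
  have "quad_form n sigout v = (\<Sum>i<n. \<Sum>j<n. sigout $$ (i,j) * (cnj (v $ i) * v $ j))"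
    unfolding quad_form_def by (intro sum.cong refl) (simp add: ac_simps)
  also have "\<dots> = quad_form d \<rho> (vec2 d k l (v $ a) (v $ b))"
    by (subst SUPP) (subst quad_vec2[OF k l kl], simp add: mult.commute mult.left_commute)
  finally show ?thesis .
qed

lemma psd_sigout: "psd d \<rho> \<Longrightarrow> psd n sigout"
  unfolding psd_def using sigout_carrier quad_sigout vec2_carrier by metis

lemma trace_formula:
  assumes M: "M \<in> carrier_mat d d" and N: "N \<in> carrier_mat d d"
  shows "mtrace (sigout * kron M N) = \<rho> $$ (k,k) * M $$ (k,k) * N $$ (0,0) + \<rho> $$ (k,l) * M $$ (l,k) * N $$ (1,0)
     + \<rho> $$ (l,k) * M $$ (k,l) * N $$ (0,1) + \<rho> $$ (l,l) * M $$ (l,l) * N $$ (1,1)"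
proof -
  have X: "kron M N \<in> carrier_mat n n" using kron_carrier[of M N] M N by simp
  have "mtrace (sigout * kron M N) = (\<Sum>i<n. (sigout * kron M N) $$ (i,i))"
    unfolding mtrace_def using sigout_carrier by simp
  also have "\<dots> = (\<Sum>i<n. \<Sum>j<n. sigout $$ (i,j) * kron M N $$ (j,i))"
    by (intro sum.cong refl) (simp add: mult_entry[OF sigout_carrier X])
  also have "\<dots> = \<rho> $$ (k,k) * kron M N $$ (a,a) + \<rho> $$ (k,l) * kron M N $$ (b,a)
      + \<rho> $$ (l,k) * kron M N $$ (a,b) + \<rho> $$ (l,l) * kron M N $$ (b,b)"
    by (rule SUPP)
  also have "kron M N $$ (a,a) = M $$ (k,k) * N $$ (0,0)" using al M N d2 by (simp add: kron_entry)
  also have "kron M N $$ (b,a) = M $$ (l,k) * N $$ (1,0)" using al bl M N d2 by (simp add: kron_entry bmod bdiv)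
  also have "kron M N $$ (a,b) = M $$ (k,l) * N $$ (0,1)" using al bl M N d2 by (simp add: kron_entry bmod bdiv)
  also have "kron M N $$ (b,b) = M $$ (l,l) * N $$ (1,1)" using al bl M N d2 by (simp add: kron_entry bmod bdiv)
  finally show ?thesis by (simp add: mult.assoc)
qed

end




definition PM :: "nat \<Rightarrow> (nat \<Rightarrow> real) \<Rightarrow> complex vec \<Rightarrow> complex mat" where
  "PM n D w = mat n n (\<lambda>(i,j). (if i = j then complex_of_real (D i) else 0) + w $ i * cnj (w $ j))"

lemma PM_carrier[simp]: "PM n D w \<in> carrier_mat n n" by (simp add: PM_def)

lemma PM_dims[simp]: "dim_row (PM n D w) = n" "dim_col (PM n D w) = n" by (auto simp: PM_def)

lemma PM_entry: "i < n \<Longrightarrow> j < n \<Longrightarrow> PM n D w $$ (i,j) = (if i = j then complex_of_real (D i) else 0) + w $ i * cnj (w $ j)"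
  by (simp add: PM_def)

lemma psd_PM: assumes "\<And>i. i < n \<Longrightarrow> D i \<ge> 0" shows "psd n (PM n D w)"
  unfolding psd_def
proof (intro conjI ballI)
  fix v :: "complex vec" assume "v \<in> carrier_vec n"
  define s where "s = (\<Sum>i<n. cnj (v $ i) * w $ i)"
  have "quad_form n (PM n D w) v = (\<Sum>i<n. \<Sum>j<n. (if i = j then cnj (v $ i) * complex_of_real (D i) * v $ j else 0)
      + (cnj (v $ i) * w $ i) * (cnj (w $ j) * v $ j))"
    unfolding quad_form_def by (intro sum.cong refl) (simp add: PM_entry algebra_simps)
  also have "\<dots> = (\<Sum>i<n. complex_of_real (D i * (cmod (v $ i))^2)) + s * cnj s"
  proof -
    have 1: "(\<Sum>i<n. \<Sum>j<n. (if i = j then cnj (v $ i) * complex_of_real (D i) * v $ j else 0))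
       = (\<Sum>i<n. complex_of_real (D i * (cmod (v $ i))^2))"
    proof (intro sum.cong refl)
      fix i assume "i \<in> {..<n}"
      hence "(\<Sum>j<n. (if i = j then cnj (v $ i) * complex_of_real (D i) * v $ j else 0)) = cnj (v $ i) * complex_of_real (D i) * v $ i"
        by (simp add: sum.delta)
      also have "\<dots> = complex_of_real (D i * (cmod (v $ i))^2)"
        using complex_norm_square[of "v $ i"] by (simp add: mult.commute mult.left_commute)
      finally show "(\<Sum>j<n. (if i = j then cnj (v $ i) * complex_of_real (D i) * v $ j else 0)) = complex_of_real (D i * (cmod (v $ i))^2)" .
    qed
    have 2: "(\<Sum>i<n. \<Sum>j<n. (cnj (v $ i) * w $ i) * (cnj (w $ j) * v $ j)) = s * cnj s"
    proof -
      have c: "cnj s = (\<Sum>j<n. cnj (w $ j) * v $ j)" unfolding s_def by (simp add: mult.commute)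
      show ?thesis unfolding c unfolding s_def sum_product ..
    qed
    show ?thesis using 1 2 by (simp add: sum.distrib)
  qed
  also have "\<dots> = complex_of_real ((\<Sum>i<n. D i * (cmod (v $ i))^2) + (cmod s)^2)"
    using complex_norm_square[of s] by simp
  finally have q: "quad_form n (PM n D w) v = complex_of_real ((\<Sum>i<n. D i * (cmod (v $ i))^2) + (cmod s)^2)" .
  have "(\<Sum>i<n. D i * (cmod (v $ i))^2) \<ge> 0" using assms by (intro sum_nonneg) simp
  thus "Im (quad_form n (PM n D w) v) = 0" "Re (quad_form n (PM n D w) v) \<ge> 0" unfolding q by auto
qed simp




definition hh :: real where "hh = sqrt (1/2)"
lemma hh_sq: "complex_of_real hh * complex_of_real hh = 1/2"
proof -
  have "hh * hh = 1/2" unfolding hh_def by (simp add: real_sqrt_mult_self)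
  thus ?thesis by (metis of_real_mult of_real_divide of_real_1 of_real_numeral)
qed

definition MA :: "nat \<Rightarrow> nat \<Rightarrow> nat \<Rightarrow> complex \<Rightarrow> nat \<Rightarrow> nat \<Rightarrow> complex mat" where
  "MA d k l \<omega> x a = (if x = 0 then (if a = 0 then PM d (\<lambda>i. if i = l then 0 else 1) (0\<^sub>v d)
        else PM d (\<lambda>i. if i = l then 1 else 0) (0\<^sub>v d))
     else (if a = 0 then PM d (\<lambda>i. if i = k \<or> i = l then 0 else 1) (vec2 d k l (complex_of_real hh) (cnj \<omega> * complex_of_real hh))
        else PM d (\<lambda>i. 0) (vec2 d k l (complex_of_real hh) (- cnj \<omega> * complex_of_real hh))))"

definition NB :: "nat \<Rightarrow> real \<Rightarrow> real \<Rightarrow> nat \<Rightarrow> nat \<Rightarrow> complex mat" where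
  "NB d al be y b = (if y = 0 then (if b = 0 then PM d (\<lambda>i. if i \<le> 1 then 0 else 1) (vec2 d 0 1 (complex_of_real al) (complex_of_real be))
        else PM d (\<lambda>i. 0) (vec2 d 0 1 (complex_of_real be) (- complex_of_real al)))
     else (if b = 0 then PM d (\<lambda>i. if i \<le> 1 then 0 else 1) (vec2 d 0 1 (complex_of_real al) (- complex_of_real be))
        else PM d (\<lambda>i. 0) (vec2 d 0 1 (complex_of_real be) (complex_of_real al))))"

lemma MA_carrier: "MA d k l \<omega> x a \<in> carrier_mat d d" by (simp add: MA_def)
lemma NB_carrier: "NB d al be y b \<in> carrier_mat d d" by (simp add: NB_def)

lemma povm_MA: assumes "k < d" "l < d" "k \<noteq> l" "\<omega> * cnj \<omega> = 1"
  shows "povm_family d 2 2 (MA d k l \<omega>)"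
  unfolding povm_family_def
proof (intro allI impI conjI)
  fix x a :: nat assume "x < 2" "a < 2"
  show "psd d (MA d k l \<omega> x a)" unfolding MA_def by (auto intro!: psd_PM)
next
  fix x :: nat assume x: "x < 2"
  have "[0..<2] = [0, 1::nat]" by (simp add: upt_rec)
  hence e: "foldr (\<lambda>a acc. MA d k l \<omega> x a + acc) [0..<2] (0\<^sub>m d d) = MA d k l \<omega> x 0 + (MA d k l \<omega> x 1 + 0\<^sub>m d d)" by simp
  show "foldr (\<lambda>a acc. MA d k l \<omega> x a + acc) [0..<2] (0\<^sub>m d d) = 1\<^sub>m d"
    unfolding e
  proof (rule eq_matI)
    fix i j assume ij: "i < dim_row (1\<^sub>m d :: complex mat)" "j < dim_col (1\<^sub>m d :: complex mat)"
    have hs: "cnj \<omega> * complex_of_real hh * (\<omega> * complex_of_real hh) = 1/2" 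
      using hh_sq assms(4) by (metis (no_types, lifting) mult.commute mult.left_commute mult_1)
    show "(MA d k l \<omega> x 0 + (MA d k l \<omega> x 1 + 0\<^sub>m d d)) $$ (i,j) = 1\<^sub>m d $$ (i,j)"
    proof -
      have h2: "2 * (complex_of_real hh * complex_of_real hh) = 1" using hh_sq by (simp add: mult.commute)
      have "\<omega> * (cnj \<omega> * (complex_of_real hh * complex_of_real hh)) = complex_of_real hh * complex_of_real hh"
        by (metis assms(4) mult.assoc mult_1)
      hence h3: "2 * (\<omega> * (cnj \<omega> * (complex_of_real hh * complex_of_real hh))) = 1" using h2 by (simp only:)
      show ?thesis using ij x assms h2 h3 by (auto simp: MA_def PM_entry vec2_def)
    qed
  qed (auto simp: MA_def PM_def)
qed

lemma povm_NB: assumes "d \<ge> 2" "al^2 + be^2 = 1"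
  shows "povm_family d 2 2 (NB d al be)"
  unfolding povm_family_def
proof (intro allI impI conjI)
  fix x a :: nat assume "x < 2" "a < 2"
  show "psd d (NB d al be x a)" unfolding NB_def by (auto intro!: psd_PM)
next
  fix x :: nat assume x: "x < 2"
  have "[0..<2] = [0, 1::nat]" by (simp add: upt_rec)
  hence e: "foldr (\<lambda>a acc. NB d al be x a + acc) [0..<2] (0\<^sub>m d d) = NB d al be x 0 + (NB d al be x 1 + 0\<^sub>m d d)" by simp
  have s: "complex_of_real al * complex_of_real al + complex_of_real be * complex_of_real be = 1"
    using assms(2) by (metis of_real_1 of_real_add of_real_mult power2_eq_square)
  show "foldr (\<lambda>a acc. NB d al be x a + acc) [0..<2] (0\<^sub>m d d) = 1\<^sub>m d"
    unfolding e
  proof (rule eq_matI)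
    fix i j assume ij: "i < dim_row (1\<^sub>m d :: complex mat)" "j < dim_col (1\<^sub>m d :: complex mat)"
    show "(NB d al be x 0 + (NB d al be x 1 + 0\<^sub>m d d)) $$ (i,j) = 1\<^sub>m d $$ (i,j)"
      using ij x assms s by (auto simp: NB_def PM_entry vec2_def algebra_simps)
  qed (auto simp: NB_def PM_def)
qed




lemma chsh_det:
  fixes A0 A1 B0 B1 :: real
  assumes "\<bar>A0\<bar> \<le> 1" "\<bar>A1\<bar> \<le> 1" "\<bar>B0\<bar> \<le> 1" "\<bar>B1\<bar> \<le> 1"
  shows "A0 * (B0 + B1) + A1 * (B0 - B1) \<le> 2"
proof -
  have "A0 * (B0 + B1) \<le> \<bar>B0 + B1\<bar>"
  proof -
    have "A0 * (B0 + B1) \<le> \<bar>A0\<bar> * \<bar>(B0 + B1)\<bar>" by (metis abs_ge_self abs_mult)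
    also have "\<dots> \<le> 1 * \<bar>(B0 + B1)\<bar>" by (rule mult_right_mono) (use assms(1) in auto)
    finally show ?thesis by simp
  qed
  moreover have "A1 * (B0 - B1) \<le> \<bar>B0 - B1\<bar>"
  proof -
    have "A1 * (B0 - B1) \<le> \<bar>A1\<bar> * \<bar>(B0 - B1)\<bar>" by (metis abs_ge_self abs_mult)
    also have "\<dots> \<le> 1 * \<bar>(B0 - B1)\<bar>" by (rule mult_right_mono) (use assms(2) in auto)
    finally show ?thesis by simp
  qed
  moreover have "\<bar>B0 + B1\<bar> + \<bar>B0 - B1\<bar> \<le> 2" using assms(3,4) by linarith
  ultimately show ?thesis by linarith
qed

lemma lhv_chsh:
  fixes q :: "nat \<Rightarrow> real" and PA PB :: "nat \<Rightarrow> nat \<Rightarrow> nat \<Rightarrow> real"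
  assumes q0: "\<forall>h<nh. q h \<ge> 0" and q1: "(\<Sum>h<nh. q h) = 1"
    and pa: "\<forall>h<nh. \<forall>x<2. (\<forall>a<2. PA h x a \<ge> 0) \<and> (\<Sum>a<2. PA h x a) = 1"
    and pb: "\<forall>h<nh. \<forall>y<2. (\<forall>b<2. PB h y b \<ge> 0) \<and> (\<Sum>b<2. PB h y b) = 1"
  defines "L \<equiv> \<lambda>x y a b. (\<Sum>h<nh. q h * PA h x a * PB h y b)"
  shows "(L 0 0 0 0 - L 0 0 0 1 - L 0 0 1 0 + L 0 0 1 1) + (L 0 1 0 0 - L 0 1 0 1 - L 0 1 1 0 + L 0 1 1 1)
       + (L 1 0 0 0 - L 1 0 0 1 - L 1 0 1 0 + L 1 0 1 1) - (L 1 1 0 0 - L 1 1 0 1 - L 1 1 1 0 + L 1 1 1 1) \<le> 2"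
proof -
  define A where "A h x = PA h x 0 - PA h x 1" for h x
  define B where "B h y = PB h y 0 - PB h y 1" for h y
  have ab: "\<bar>A h x\<bar> \<le> 1" "\<bar>B h x\<bar> \<le> 1" if "h < nh" "x < 2" for h x
  proof -
    have "PA h x 0 \<ge> 0" "PA h x 1 \<ge> 0" "PA h x 0 + PA h x 1 = 1" using pa that by (auto simp: numeral_2_eq_2)
    thus "\<bar>A h x\<bar> \<le> 1" unfolding A_def by linarith
    have "PB h x 0 \<ge> 0" "PB h x 1 \<ge> 0" "PB h x 0 + PB h x 1 = 1" using pb that by (auto simp: numeral_2_eq_2)
    thus "\<bar>B h x\<bar> \<le> 1" unfolding B_def by linarith
  qed
  have "(L 0 0 0 0 - L 0 0 0 1 - L 0 0 1 0 + L 0 0 1 1) + (L 0 1 0 0 - L 0 1 0 1 - L 0 1 1 0 + L 0 1 1 1)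
       + (L 1 0 0 0 - L 1 0 0 1 - L 1 0 1 0 + L 1 0 1 1) - (L 1 1 0 0 - L 1 1 0 1 - L 1 1 1 0 + L 1 1 1 1)
     = (\<Sum>h<nh. q h * (A h 0 * (B h 0 + B h 1) + A h 1 * (B h 0 - B h 1)))"
    unfolding L_def A_def B_def
    by (simp add: sum_subtractf[symmetric] sum.distrib[symmetric] algebra_simps)
  also have "\<dots> \<le> (\<Sum>h<nh. q h * 2)"
    by (intro sum_mono mult_left_mono chsh_det) (use ab q0 in auto)
  also have "\<dots> = 2" using q1 by (simp add: sum_distrib_right[symmetric])
  finally show ?thesis .
qed




lemma alg: fixes H A B c c' w w' R x y :: complex
  assumes "H * H = 1/2" "A + B = 1" "c * w' = R" "c' * w = R"
  shows "8 * (w' * (H * (H * (x * (y * c))))) + (2 * (x * (x * A)) + (2 * (x * (x * B)) +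
     (8 * (w * (H * (H * (x * (y * c'))))) - 2 * (y * (y * A)) - 2 * (y * (y * B)))))
   = 2 * x^2 - 2 * y^2 + 8 * x * y * R"
proof -
  have "8 * (w' * (H * (H * (x * (y * c))))) + (2 * (x * (x * A)) + (2 * (x * (x * B)) +
     (8 * (w * (H * (H * (x * (y * c'))))) - 2 * (y * (y * A)) - 2 * (y * (y * B)))))
    = 8*(H*H)*x*y*(c*w') + 8*(H*H)*x*y*(c'*w) + 2*x^2*(A+B) - 2*y^2*(A+B)" by (simp add: algebra_simps power2_eq_square)
  also have "\<dots> = 8*(1/2)*x*y*R + 8*(1/2)*x*y*R + 2*x^2 - 2*y^2" unfolding assms by simp
  also have "\<dots> = 2 * x^2 - 2 * y^2 + 8 * x * y * R" by (simp add: algebra_simps)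
  finally show ?thesis .
qed

context setting begin

lemma Qsum:
  fixes \<omega> :: complex and al be r :: real
  assumes hlk: "\<rho> $$ (l,k) = cnj (\<rho> $$ (k,l))" and tr: "\<rho> $$ (k,k) + \<rho> $$ (l,l) = 1"
    and w1: "\<rho> $$ (k,l) * cnj \<omega> = complex_of_real r" and w2: "cnj (\<rho> $$ (k,l)) * \<omega> = complex_of_real r"
  defines "Q \<equiv> \<lambda>x y a b. mtrace (sigout * kron (MA d k l \<omega> x a) (NB d al be y b))"
  shows "(Q 0 0 0 0 - Q 0 0 0 1 - Q 0 0 1 0 + Q 0 0 1 1) + (Q 0 1 0 0 - Q 0 1 0 1 - Q 0 1 1 0 + Q 0 1 1 1)
       + (Q 1 0 0 0 - Q 1 0 0 1 - Q 1 0 1 0 + Q 1 0 1 1) - (Q 1 1 0 0 - Q 1 1 0 1 - Q 1 1 1 0 + Q 1 1 1 1)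
       = complex_of_real (2 * (al^2 - be^2) + 8 * al * be * r)"
proof -
  have d0: "0 < d" "1 < d" using d2 by auto
  note tf = trace_formula[OF MA_carrier NB_carrier]
  have h2: "complex_of_real hh * complex_of_real hh = 1/2" by (rule hh_sq)
  show ?thesis unfolding Q_def tf hlk
    using k l kl d0 apply (simp add: MA_def NB_def PM_entry vec2_def)
    by (rule alg[OF h2 tr w1 w2])
qed

end




lemma V_gt: assumes "r > 0"
  defines "s \<equiv> sqrt (1 + r^2)"
  shows "(1/s)^2 + (r/s)^2 = 1" "2 * ((1/s)^2 - (r/s)^2) + 8 * (1/s) * (r/s) * r > 2"
proof -
  have s2: "s^2 = 1 + r^2" unfolding s_def by (simp add: add_pos_nonneg)
  have sp: "s > 0" unfolding s_def by (simp add: add_pos_nonneg)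
  have rp2: "1 + r^2 > 0" by (smt (verit) zero_le_power2)
  show "(1/s)^2 + (r/s)^2 = 1" using s2 sp rp2 by (simp add: power_divide add_divide_distrib[symmetric])
  have "2 * ((1/s)^2 - (r/s)^2) + 8 * (1/s) * (r/s) * r = (2 + 6 * r^2) / (1 + r^2)"
  proof -
    have e1: "(1/s)^2 = 1 / (1 + r^2)" "(r/s)^2 = r^2 / (1 + r^2)" "8 * (1/s) * (r/s) * r = 8 * r^2 / (1 + r^2)"
      using s2 by (simp_all add: power_divide power2_eq_square)
    have ne: "1 + r^2 \<noteq> 0" using rp2 by simp
    have "2 * (1 / (1 + r^2) - r^2 / (1 + r^2)) + 8 * r^2 / (1 + r^2) = (2 * (1 - r^2) + 8 * r^2) / (1 + r^2)"
      by (simp add: diff_divide_distrib add_divide_distrib)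
    thus ?thesis unfolding e1 by (simp add: algebra_simps)
  qed
  also have "\<dots> > 2" using assms(1) by (simp add: field_simps add_pos_nonneg)
  finally show "2 * ((1/s)^2 - (r/s)^2) + 8 * (1/s) * (r/s) * r > 2" .
qed

context setting begin

lemma not_local:
  assumes hlk: "\<rho> $$ (l,k) = cnj (\<rho> $$ (k,l))" and tr: "\<rho> $$ (k,k) + \<rho> $$ (l,l) = 1"
    and c0: "\<rho> $$ (k,l) \<noteq> 0"
  shows "\<not> bell_local d d sigout"
proof
  assume loc: "bell_local d d sigout"
  define c where "c = \<rho> $$ (k,l)"
  define r where "r = cmod c"
  have rp: "r > 0" using c0 unfolding r_def c_def by simp
  define \<omega> where "\<omega> = c / complex_of_real r"
  have cc: "c * cnj c = complex_of_real (r^2)" unfolding r_def using complex_norm_square[of c] by simp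
  have rne: "complex_of_real r \<noteq> 0" using rp by simp
  have om1: "\<omega> * cnj \<omega> = 1" unfolding \<omega>_def using cc rne by (simp add: power2_eq_square)
  have w1: "c * cnj \<omega> = complex_of_real r" unfolding \<omega>_def using cc rne by (simp add: power2_eq_square)
  have w2: "cnj c * \<omega> = complex_of_real r" unfolding \<omega>_def using cc rne by (simp add: power2_eq_square mult.commute)
  define s where "s = sqrt (1 + r^2)"
  define al where "al = 1 / s"
  define be where "be = r / s"
  have ab1: "al^2 + be^2 = 1" and Vg: "2 * (al^2 - be^2) + 8 * al * be * r > 2"
    using V_gt[OF rp] unfolding al_def be_def s_def by auto
  have pM: "povm_family d 2 2 (MA d k l \<omega>)" by (rule povm_MA[OF k l kl om1])
  have pN: "povm_family d 2 2 (NB d al be)" by (rule povm_NB[OF d2 ab1])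
  have pp: "povm_family d 2 2 (MA d k l \<omega>) \<and> povm_family d 2 2 (NB d al be)" using pM pN by simp
  from loc[unfolded bell_local_def, rule_format, OF pp]
  obtain nh and q :: "nat \<Rightarrow> real" and PA PB :: "nat \<Rightarrow> nat \<Rightarrow> nat \<Rightarrow> real" where q0: "\<forall>h<nh. q h \<ge> 0" and q1: "(\<Sum>h<nh. q h) = 1"
    and pa: "\<forall>h<nh. \<forall>x<2. (\<forall>a<2. PA h x a \<ge> 0) \<and> (\<Sum>a<2. PA h x a) = 1"
    and pb: "\<forall>h<nh. \<forall>y<2. (\<forall>b<2. PB h y b \<ge> 0) \<and> (\<Sum>b<2. PB h y b) = 1"
    and eq: "\<forall>x<2. \<forall>y<2. \<forall>a<2. \<forall>b<2. mtrace (sigout * kron (MA d k l \<omega> x a) (NB d al be y b))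
         = complex_of_real (\<Sum>h<nh. q h * PA h x a * PB h y b)"
    by blast
  define L where "L = (\<lambda>x y a b. (\<Sum>h<nh. q h * PA h x a * PB h y b))"
  define Q where "Q = (\<lambda>x y a b. mtrace (sigout * kron (MA d k l \<omega> x a) (NB d al be y b)))"
  have QL: "Q x y a b = complex_of_real (L x y a b)" if "x < 2" "y < 2" "a < 2" "b < 2" for x y a b
    using eq that unfolding Q_def L_def by blast
  have "(Q 0 0 0 0 - Q 0 0 0 1 - Q 0 0 1 0 + Q 0 0 1 1) + (Q 0 1 0 0 - Q 0 1 0 1 - Q 0 1 1 0 + Q 0 1 1 1)
       + (Q 1 0 0 0 - Q 1 0 0 1 - Q 1 0 1 0 + Q 1 0 1 1) - (Q 1 1 0 0 - Q 1 1 0 1 - Q 1 1 1 0 + Q 1 1 1 1)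
       = complex_of_real (2 * (al^2 - be^2) + 8 * al * be * r)"
    unfolding Q_def by (rule Qsum[OF hlk tr]) (use w1 w2 c_def in auto)
  moreover have "(Q 0 0 0 0 - Q 0 0 0 1 - Q 0 0 1 0 + Q 0 0 1 1) + (Q 0 1 0 0 - Q 0 1 0 1 - Q 0 1 1 0 + Q 0 1 1 1)
       + (Q 1 0 0 0 - Q 1 0 0 1 - Q 1 0 1 0 + Q 1 0 1 1) - (Q 1 1 0 0 - Q 1 1 0 1 - Q 1 1 1 0 + Q 1 1 1 1)
       = complex_of_real ((L 0 0 0 0 - L 0 0 0 1 - L 0 0 1 0 + L 0 0 1 1) + (L 0 1 0 0 - L 0 1 0 1 - L 0 1 1 0 + L 0 1 1 1)
       + (L 1 0 0 0 - L 1 0 0 1 - L 1 0 1 0 + L 1 0 1 1) - (L 1 1 0 0 - L 1 1 0 1 - L 1 1 1 0 + L 1 1 1 1))"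
    by (simp add: QL)
  ultimately have "2 * (al^2 - be^2) + 8 * al * be * r = (L 0 0 0 0 - L 0 0 0 1 - L 0 0 1 0 + L 0 0 1 1) + (L 0 1 0 0 - L 0 1 0 1 - L 0 1 1 0 + L 0 1 1 1)
       + (L 1 0 0 0 - L 1 0 0 1 - L 1 0 1 0 + L 1 0 1 1) - (L 1 1 0 0 - L 1 1 0 1 - L 1 1 1 0 + L 1 1 1 1)"
    using of_real_eq_iff by metis
  also have "\<dots> \<le> 2" unfolding L_def by (rule lhv_chsh[OF q0 q1 pa pb])
  finally show False using Vg by simp
qed

end




lemma sum_list_upt_lessThan: "(\<Sum>a\<leftarrow>[0..<r]. f a) = (\<Sum>a<r. f a)"
  by (simp add: sum_set_upt_conv_sum_list_nat[symmetric] atLeast0LessThan)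

lemma povm_sum: assumes "povm_family n m r M" "x < m" "i < n"
  shows "(\<Sum>a<r. M x a $$ (i,i)) = 1"
proof -
  have c: "\<forall>a\<in>set [0..<r]. M x a \<in> carrier_mat n n" using assms(1,2) by (auto simp: povm_family_def psd_def)
  have "foldr (\<lambda>a acc. M x a + acc) [0..<r] (0\<^sub>m n n) = 1\<^sub>m n" using assms(1,2) by (auto simp: povm_family_def)
  hence "foldr (\<lambda>a acc. M x a + acc) [0..<r] (0\<^sub>m n n) $$ (i,i) = 1" using assms(3) by simp
  thus ?thesis using foldr_sum_entry[OF c] assms(3) by (simp add: sum_list_upt_lessThan)
qed

lemma povm_psd: "povm_family n m r M \<Longrightarrow> x < m \<Longrightarrow> a < r \<Longrightarrow> psd n (M x a)"
  by (simp add: povm_family_def)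

lemma local_diag:
  assumes dens: "density (d * d) \<sigma>" and diag: "diagonal_mat \<sigma>" and d0: "d > 0"
  shows "bell_local d d \<sigma>"
  unfolding bell_local_def
proof (intro allI impI)
  fix mA mB oA oB M N assume "povm_family d mA oA M \<and> povm_family d mB oB N"
  hence pM: "povm_family d mA oA M" and pN: "povm_family d mB oB N" by auto
  have ps: "psd (d*d) \<sigma>" and tr: "mtrace \<sigma> = 1" using dens by (auto simp: density_def)
  have sc: "\<sigma> \<in> carrier_mat (d*d) (d*d)" using ps by (simp add: psd_def)
  define q where "q h = Re (\<sigma> $$ (h,h))" for h
  define PA where "PA h x a = Re (M x a $$ (h div d, h div d))" for h x a
  define PB where "PB h y b = Re (N y b $$ (h mod d, h mod d))" for h y b
  have hd: "h div d < d" "h mod d < d" if "h < d * d" for h using that d0 by (auto simp: less_mult_imp_div_less)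
  have Q1: "\<forall>h<d*d. q h \<ge> 0" unfolding q_def using psd_diag[OF ps] by auto
  have Q2: "(\<Sum>h<d*d. q h) = 1"
  proof -
    have "(\<Sum>h<d*d. q h) = Re (\<Sum>h<d*d. \<sigma> $$ (h,h))" unfolding q_def by simp
    also have "\<dots> = 1" using tr sc unfolding mtrace_def by simp
    finally show "(\<Sum>h<d*d. q h) = 1" .
  qed
  have Q3: "\<forall>h<d*d. \<forall>x<mA. (\<forall>a<oA. PA h x a \<ge> 0) \<and> (\<Sum>a<oA. PA h x a) = 1"
  proof (intro allI impI conjI)
    fix h x a assume "h < d * d" "x < mA" "a < oA"
    thus "PA h x a \<ge> 0" unfolding PA_def using psd_diag[OF povm_psd[OF pM]] hd by auto
  next
    fix h x assume h: "h < d * d" and x: "x < mA"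
    have "(\<Sum>a<oA. PA h x a) = Re (\<Sum>a<oA. M x a $$ (h div d, h div d))" unfolding PA_def by simp
    thus "(\<Sum>a<oA. PA h x a) = 1" using povm_sum[OF pM x hd(1)[OF h]] by simp
  qed
  have Q4: "\<forall>h<d*d. \<forall>y<mB. (\<forall>b<oB. PB h y b \<ge> 0) \<and> (\<Sum>b<oB. PB h y b) = 1"
  proof (intro allI impI conjI)
    fix h y b assume "h < d * d" "y < mB" "b < oB"
    thus "PB h y b \<ge> 0" unfolding PB_def using psd_diag[OF povm_psd[OF pN]] hd by auto
  next
    fix h y assume h: "h < d * d" and y: "y < mB"
    have "(\<Sum>b<oB. PB h y b) = Re (\<Sum>b<oB. N y b $$ (h mod d, h mod d))" unfolding PB_def by simp
    thus "(\<Sum>b<oB. PB h y b) = 1" using povm_sum[OF pN y hd(2)[OF h]] by simp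
  qed
  have Q5: "\<forall>x<mA. \<forall>y<mB. \<forall>a<oA. \<forall>b<oB.
             mtrace (\<sigma> * kron (M x a) (N y b)) = complex_of_real (\<Sum>h<d*d. q h * PA h x a * PB h y b)"
  proof (intro allI impI)
    fix x y a b assume x: "x < mA" and y: "y < mB" and a: "a < oA" and b: "b < oB"
    have Mc: "M x a \<in> carrier_mat d d" using povm_psd[OF pM x a] by (simp add: psd_def)
    have Nc: "N y b \<in> carrier_mat d d" using povm_psd[OF pN y b] by (simp add: psd_def)
    have Kc: "kron (M x a) (N y b) \<in> carrier_mat (d*d) (d*d)" using kron_carrier[of "M x a" "N y b"] Mc Nc by simp
    have "mtrace (\<sigma> * kron (M x a) (N y b)) = (\<Sum>h<d*d. (\<sigma> * kron (M x a) (N y b)) $$ (h,h))"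
      unfolding mtrace_def using sc by simp
    also have "\<dots> = (\<Sum>h<d*d. \<sigma> $$ (h,h) * kron (M x a) (N y b) $$ (h,h))"
    proof (intro sum.cong refl)
      fix h assume h: "h \<in> {..<d*d}"
      show "(\<sigma> * kron (M x a) (N y b)) $$ (h,h) = \<sigma> $$ (h,h) * kron (M x a) (N y b) $$ (h,h)"
        apply (subst mult_entry[OF sc Kc]) using h apply simp_all
        apply (rule sum1) using diag sc unfolding diagonal_mat_def by auto
    qed
    also have "\<dots> = (\<Sum>h<d*d. complex_of_real (q h * PA h x a * PB h y b))"
    proof (intro sum.cong refl)
      fix h assume h: "h \<in> {..<d*d}"
      hence h': "h < d * d" by simp
      have "kron (M x a) (N y b) $$ (h,h) = M x a $$ (h div d, h div d) * N y b $$ (h mod d, h mod d)"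
        using h' Mc Nc by (simp add: kron_entry)
      moreover have "\<sigma> $$ (h,h) = complex_of_real (q h)" unfolding q_def using psd_diag(3)[OF ps h'] .
      moreover have "M x a $$ (h div d, h div d) = complex_of_real (PA h x a)" unfolding PA_def
        using psd_diag(3)[OF povm_psd[OF pM x a] hd(1)[OF h']] .
      moreover have "N y b $$ (h mod d, h mod d) = complex_of_real (PB h y b)" unfolding PB_def
        using psd_diag(3)[OF povm_psd[OF pN y b] hd(2)[OF h']] .
      ultimately show "\<sigma> $$ (h,h) * kron (M x a) (N y b) $$ (h,h) = complex_of_real (q h * PA h x a * PB h y b)"
        by simp
    qed
    also have "\<dots> = complex_of_real (\<Sum>h<d*d. q h * PA h x a * PB h y b)" by simp
    finally show "mtrace (\<sigma> * kron (M x a) (N y b)) = complex_of_real (\<Sum>h<d*d. q h * PA h x a * PB h y b)" .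
  qed
  show "\<exists>nh (q :: nat \<Rightarrow> real) (PA :: nat \<Rightarrow> nat \<Rightarrow> nat \<Rightarrow> real) (PB :: nat \<Rightarrow> nat \<Rightarrow> nat \<Rightarrow> real).
          (\<forall>h<nh. q h \<ge> 0) \<and> (\<Sum>h<nh. q h) = 1 \<and>
          (\<forall>h<nh. \<forall>x<mA. (\<forall>a<oA. PA h x a \<ge> 0) \<and> (\<Sum>a<oA. PA h x a) = 1) \<and>
          (\<forall>h<nh. \<forall>y<mB. (\<forall>b<oB. PB h y b \<ge> 0) \<and> (\<Sum>b<oB. PB h y b) = 1) \<and>
          (\<forall>x<mA. \<forall>y<mB. \<forall>a<oA. \<forall>b<oB.
             mtrace (\<sigma> * kron (M x a) (N y b)) = complex_of_real (\<Sum>h<nh. q h * PA h x a * PB h y b))"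
    by (rule exI[of _ "d*d"], rule exI[of _ q], rule exI[of _ PA], rule exI[of _ PB]) (intro conjI Q1 Q2 Q3 Q4 Q5)
qed




lemma kraus_diag:
  assumes "\<forall>K\<in>set Ks. K \<in> carrier_mat n n \<and> diagonal_mat (K * \<sigma> * mat_adjoint K)" "\<sigma> \<in> carrier_mat n n"
  shows "apply_kraus n Ks \<sigma> \<in> carrier_mat n n \<and> diagonal_mat (apply_kraus n Ks \<sigma>)"
  using assms(1)
proof (induction Ks)
  case Nil
  then show ?case by (auto simp: apply_kraus_def diagonal_mat_def)
next
  case (Cons K Ks)
  have Kc: "K \<in> carrier_mat n n" and dK: "diagonal_mat (K * \<sigma> * mat_adjoint K)" using Cons.prems by auto
  have ih: "apply_kraus n Ks \<sigma> \<in> carrier_mat n n" "diagonal_mat (apply_kraus n Ks \<sigma>)" using Cons by auto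
  have e: "apply_kraus n (K # Ks) \<sigma> = K * \<sigma> * mat_adjoint K + apply_kraus n Ks \<sigma>"
    by (simp add: apply_kraus_def)
  have ac: "mat_adjoint K \<in> carrier_mat n n" using Kc by (simp add: adj_eq)
  have c1: "K * \<sigma> * mat_adjoint K \<in> carrier_mat n n" using Kc assms(2) ac by (meson mult_carrier_mat)
  have dK': "\<forall>i<n. \<forall>j<n. i \<noteq> j \<longrightarrow> (K * \<sigma> * mat_adjoint K) $$ (i,j) = 0"
    using dK c1 unfolding diagonal_mat_def by (metis carrier_matD)
  show ?case unfolding e using c1 ih dK' unfolding diagonal_mat_def by auto
qed

lemma sum_mult_d:
  fixes f :: "nat \<Rightarrow> complex"
  assumes d0: "(d::nat) > 0" and z: "\<And>i. i < d * d \<Longrightarrow> i mod d \<noteq> 0 \<Longrightarrow> f i = 0"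
  shows "(\<Sum>i<d*d. f i) = (\<Sum>t<d. f (t * d))"
proof -
  have "(\<Sum>i<d*d. f i) = (\<Sum>i\<in>(\<lambda>t. t * d) ` {..<d}. f i)"
  proof (rule sum.mono_neutral_right)
    show "(\<lambda>t. t * d) ` {..<d} \<subseteq> {..<d*d}" using d0 by auto
    show "\<forall>i\<in>{..<d * d} - (\<lambda>t. t * d) ` {..<d}. f i = 0"
    proof
      fix i assume i: "i \<in> {..<d * d} - (\<lambda>t. t * d) ` {..<d}"
      show "f i = 0"
      proof (cases "i mod d = 0")
        case True
        hence "i = (i div d) * d" by (metis add.right_neutral div_mult_mod_eq)
        moreover have "i div d < d" using i d0 by (auto simp: less_mult_imp_div_less)
        ultimately show ?thesis using i by blast
      qed (use i z in auto)
    qed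
  qed simp
  also have "\<dots> = (\<Sum>t<d. f (t * d))"
    by (rule sum.reindex_cong[of "\<lambda>t. t * d"]) (use d0 in \<open>auto simp: inj_on_def\<close>)
  finally show ?thesis .
qed

lemma sigin_incoherent:
  assumes d0: "d > 0" and dens: "density d \<rho>" and diag: "diagonal_mat \<rho>"
  shows "incoherent_state (d*d) (kron \<rho> (ket0_proj d))"
proof -
  have ps: "psd d \<rho>" and tr: "mtrace \<rho> = 1" using dens by (auto simp: density_def)
  have rc: "\<rho> \<in> carrier_mat d d" using ps by (simp add: psd_def)
  let ?S = "kron \<rho> (ket0_proj d)"
  have Sc: "?S \<in> carrier_mat (d*d) (d*d)" using kron_carrier[of \<rho> "ket0_proj d"] rc by simp
  have hd: "h div d < d" "h mod d < d" if "h < d * d" for h using that d0 by (auto simp: less_mult_imp_div_less)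
  have Se: "?S $$ (i,j) = \<rho> $$ (i div d, j div d) * (if i mod d = 0 \<and> j mod d = 0 then 1 else 0)"
    if "i < d*d" "j < d*d" for i j
    using that rc d0 hd by (simp add: kron_entry ket0_entry)
  define D where "D i = Re (\<rho> $$ (i div d, i div d)) * (if i mod d = 0 then 1 else 0)" for i
  have SP: "?S = PM (d*d) D (0\<^sub>v (d*d))"
  proof (rule eq_matI)
    fix i j assume "i < dim_row (PM (d*d) D (0\<^sub>v (d*d)))" "j < dim_col (PM (d*d) D (0\<^sub>v (d*d)))"
    hence ij: "i < d*d" "j < d*d" by auto
    show "?S $$ (i,j) = PM (d*d) D (0\<^sub>v (d*d)) $$ (i,j)"
    proof (cases "i = j")
      case True
      then show ?thesis using ij Se[OF ij] psd_diag(3)[OF ps hd(1)[OF ij(1)]] by (simp add: PM_entry D_def)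
    next
      case False
      show ?thesis
      proof (cases "i mod d = 0 \<and> j mod d = 0")
        case True
        hence "i div d \<noteq> j div d" using False by (metis add.right_neutral div_mult_mod_eq)
        hence "\<rho> $$ (i div d, j div d) = 0" using diag rc hd ij unfolding diagonal_mat_def by auto
        then show ?thesis using ij Se[OF ij] False by (simp add: PM_entry)
      qed (use ij Se[OF ij] False in \<open>auto simp: PM_entry\<close>)
    qed
  qed (use Sc in auto)
  have psS: "psd (d*d) ?S" unfolding SP
    by (rule psd_PM) (use psd_diag(2)[OF ps] hd in \<open>auto simp: D_def\<close>)
  have "mtrace ?S = (\<Sum>i<d*d. ?S $$ (i,i))" unfolding mtrace_def using Sc by simp
  also have "\<dots> = (\<Sum>t<d. ?S $$ (t*d, t*d))"
    by (rule sum_mult_d[OF d0]) (simp add: Se)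
  also have "\<dots> = (\<Sum>t<d. \<rho> $$ (t,t))"
  proof (intro sum.cong refl)
    fix t assume "t \<in> {..<d}"
    hence "t * d < d * d" using d0 by simp
    thus "?S $$ (t*d, t*d) = \<rho> $$ (t,t)" using Se d0 by simp
  qed
  also have "\<dots> = 1" using tr rc unfolding mtrace_def by simp
  finally have "mtrace ?S = 1" .
  moreover have "diagonal_mat ?S" unfolding SP diagonal_mat_def by (auto simp: PM_entry)
  ultimately show ?thesis using psS by (simp add: incoherent_state_def density_def)
qed




theorem mainTheorem3:
  fixes d :: nat and \<rho> :: "complex mat" and k l :: nat
  assumes "d \<ge> 2"
    and "density d \<rho>"
    and "vec_space.rank d \<rho> = 2"
    and "k < d" and "l < d" and "k \<noteq> l"
    and "Re (\<rho> $$ (k,k)) > 0" and "Re (\<rho> $$ (l,l)) > 0"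
    and "\<rho> $$ (k,k) + \<rho> $$ (l,l) = 1"
  shows "(\<exists>Ks. incoherent_operation (d * d) Ks \<and>
            bell_nonlocal d d (apply_kraus (d * d) Ks (kron \<rho> (ket0_proj d))))
         \<longleftrightarrow> coherent_state d \<rho>"
proof
  assume "\<exists>Ks. incoherent_operation (d * d) Ks \<and>
            bell_nonlocal d d (apply_kraus (d * d) Ks (kron \<rho> (ket0_proj d)))"
  then obtain Ks where io: "incoherent_operation (d * d) Ks"
    and nl: "bell_nonlocal d d (apply_kraus (d * d) Ks (kron \<rho> (ket0_proj d)))" by blast
  have d0: "d > 0" using assms(1) by simp
  show "coherent_state d \<rho>" unfolding coherent_state_def
  proof (intro conjI notI)
    show "density d \<rho>" by (rule assms(2))
  next
    assume diag: "diagonal_mat \<rho>"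
    have inc: "incoherent_state (d*d) (kron \<rho> (ket0_proj d))" by (rule sigin_incoherent[OF d0 assms(2) diag])
    have sc: "kron \<rho> (ket0_proj d) \<in> carrier_mat (d*d) (d*d)"
      using inc by (simp add: incoherent_state_def density_def psd_def)
    have "\<forall>K\<in>set Ks. K \<in> carrier_mat (d*d) (d*d) \<and> diagonal_mat (K * kron \<rho> (ket0_proj d) * mat_adjoint K)"
      using io inc unfolding incoherent_operation_def by blast
    hence dg: "diagonal_mat (apply_kraus (d * d) Ks (kron \<rho> (ket0_proj d)))"
      using kraus_diag[OF _ sc] by blast
    have "density (d*d) (apply_kraus (d * d) Ks (kron \<rho> (ket0_proj d)))" using nl by (simp add: bell_nonlocal_def)
    hence "bell_local d d (apply_kraus (d * d) Ks (kron \<rho> (ket0_proj d)))" using local_diag dg d0 by blast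
    thus False using nl by (simp add: bell_nonlocal_def)
  qed
next
  assume coh: "coherent_state d \<rho>"
  have ps: "psd d \<rho>" and tr: "mtrace \<rho> = 1" and nd: "\<not> diagonal_mat \<rho>"
    using coh by (auto simp: coherent_state_def density_def)
  have rc: "\<rho> \<in> carrier_mat d d" using ps by (simp add: psd_def)
  have k: "k < d" and l: "l < d" and kl: "k \<noteq> l" using assms by auto
  have zd: "\<rho> $$ (i,i) = 0" if "i < d" "i \<noteq> k" "i \<noteq> l" for i
  proof -
    have s1: "(\<Sum>i<d. Re (\<rho> $$ (i,i))) = 1" using tr rc unfolding mtrace_def by (simp flip: Re_sum)
    have s2: "Re (\<rho> $$ (k,k)) + Re (\<rho> $$ (l,l)) = 1" using assms(9) by (metis one_complex.simps(1) plus_complex.simps(1))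
    have sub: "{k,l} \<subseteq> {..<d}" using k l by auto
    have "(\<Sum>i<d. Re (\<rho> $$ (i,i))) = (\<Sum>i\<in>{..<d} - {k,l}. Re (\<rho> $$ (i,i))) + (\<Sum>i\<in>{k,l}. Re (\<rho> $$ (i,i)))"
      by (rule sum.subset_diff[OF sub]) simp
    hence z: "(\<Sum>i\<in>{..<d} - {k,l}. Re (\<rho> $$ (i,i))) = 0" using s1 s2 kl by simp
    have "\<forall>i\<in>{..<d} - {k,l}. Re (\<rho> $$ (i,i)) = 0"
      using sum_nonneg_eq_0_iff[of "{..<d} - {k,l}" "\<lambda>i. Re (\<rho> $$ (i,i))"] z psd_diag(2)[OF ps] by auto
    hence "Re (\<rho> $$ (i,i)) = 0" using that by auto
    thus ?thesis using psd_diag(3)[OF ps that(1)] by simp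
  qed
  have supp: "(i = k \<or> i = l) \<and> (j = k \<or> j = l)" if "i < d" "j < d" "\<rho> $$ (i,j) \<noteq> 0" for i j
  proof -
    have "\<rho> $$ (i,i) \<noteq> 0" using psd_zero[OF ps that(1,2)] that(3) by blast
    moreover have "\<rho> $$ (j,i) \<noteq> 0" using psd_herm[OF ps that(1,2)] that(3) by simp
    hence "\<rho> $$ (j,j) \<noteq> 0" using psd_zero[OF ps that(2,1)] by blast
    ultimately show ?thesis using zd that by blast
  qed
  interpret setting d k l \<rho>
    by unfold_locales (use assms(1) k l kl rc supp in auto)
  have hlk: "\<rho> $$ (l,k) = cnj (\<rho> $$ (k,l))" using psd_herm[OF ps k l] .
  have c0: "\<rho> $$ (k,l) \<noteq> 0"
  proof -
    obtain i j where ij: "i < d" "j < d" "i \<noteq> j" "\<rho> $$ (i,j) \<noteq> 0"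
      using nd rc unfolding diagonal_mat_def by auto
    hence "(i = k \<and> j = l) \<or> (i = l \<and> j = k)" using supp by blast
    thus ?thesis using ij hlk by auto
  qed
  have "incoherent_operation (d * d) [Kmat (d*d) pp]" by (rule incoh_op)
  moreover have "bell_nonlocal d d (apply_kraus (d * d) [Kmat (d*d) pp] (kron \<rho> (ket0_proj d)))"
    unfolding bell_nonlocal_def sigin_def[symmetric] apply_out
    using psd_sigout[OF ps] mtrace_sigout assms(9) not_local[OF hlk assms(9) c0]
    by (simp add: density_def)
  ultimately show "\<exists>Ks. incoherent_operation (d * d) Ks \<and>
            bell_nonlocal d d (apply_kraus (d * d) Ks (kron \<rho> (ket0_proj d)))" by blast
qed


end
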